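(* Let $(A,\preccurlyeq)$ be a partially ordered set and let $U_\preccurlyeq(A)\subseteq 2^A$ be the set of up-sets of $A$, with the topology induced by the natural (product) topology on $2^A$. Then for $x\in U_\preccurlyeq(A)$ the following are equivalent: (i) $x$ is an isolated point of $U_\preccurlyeq(A)$, i.e., $x$ is not in the closure of $U_\preccurlyeq(A)-\{x\}$; (ii) $x$ is both the union of a finite (possibly empty) family of principal up-sets and the intersection of a finite (possibly empty) family of complements of principal down-sets.
   Context: An up-set is a subset $x\subseteq A$ with $a\in x$, $a\preccurlyeq b$ implying $b\in x$. The principal up-set determined by $a$ is ${\uparrow}(a)=\{b\mid b\succcurlyeq a\}$, the principal down-set is ${\downarrow}(a)=\{b\mid b\preccurlyeq a\}$; complements are taken in $A$. The natural topology on $2^A$ (the set of subsets of $A$) is the product topology of copies of the discrete space $\{0,1\}$; a subbasis is given by the sets $\{x\mid a\in x\}$ and $\{x\mid a\notin x\}$ for $a\in A$. The empty intersection is $A$ and the empty union is $\emptyset$. *)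

theory Defs
  imports "HOL-Analysis.Analysis"
begin

definition up_sets :: "'a::order set \<Rightarrow> 'a set set" where
  "up_sets A = {x. x \<subseteq> A \<and> (\<forall>a\<in>x. \<forall>b\<in>A. a \<le> b \<longrightarrow> b \<in> x)}"

definition principal_up :: "'a::order set \<Rightarrow> 'a \<Rightarrow> 'a set" where
  "principal_up A a = {b\<in>A. a \<le> b}"

definition principal_down :: "'a::order set \<Rightarrow> 'a \<Rightarrow> 'a set" where
  "principal_down A a = {b\<in>A. b \<le> a}"

text \<open>Natural (product) topology on 2^A = Pow A, generated by the subbasis
  {x. a \<in> x}, {x. a \<notin> x} (a \<in> A); the whole space Pow A is added so that
  the topspace is Pow A also when A is empty.\<close>
definition nat_top :: "'a set \<Rightarrow> 'a set topology" where
  "nat_top A = topology_generated_by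
     (insert (Pow A) ((\<lambda>a. {x. x \<subseteq> A \<and> a \<in> x}) ` A \<union> (\<lambda>a. {x. x \<subseteq> A \<and> a \<notin> x}) ` A))"

end

theory Submission
  imports Defs
begin

definition basic :: "'a set \<Rightarrow> 'a set \<Rightarrow> 'a set \<Rightarrow> 'a set set" where
  "basic A P N = {y. y \<subseteq> A \<and> P \<subseteq> y \<and> N \<inter> y = {}}"

definition nb :: "'a set \<Rightarrow> 'a set \<Rightarrow> 'a set set \<Rightarrow> bool" where
  "nb A x U = (\<exists>P N. finite P \<and> finite N \<and> P \<subseteq> A \<and> N \<subseteq> A \<and> P \<subseteq> x \<and> N \<inter> x = {}
           \<and> basic A P N \<subseteq> U)"

lemma nb_mono: "nb A x U \<Longrightarrow> U \<subseteq> V \<Longrightarrow> nb A x V"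
  unfolding nb_def by (meson order_trans)

lemma nb_intro:
  "finite P \<Longrightarrow> finite N \<Longrightarrow> P \<subseteq> A \<Longrightarrow> N \<subseteq> A \<Longrightarrow> P \<subseteq> x \<Longrightarrow> N \<inter> x = {}
    \<Longrightarrow> basic A P N \<subseteq> U \<Longrightarrow> nb A x U"
  unfolding nb_def by (rule exI[of _ P], rule exI[of _ N]) simp

lemma nb_int:
  assumes "nb A x U" "nb A x V" shows "nb A x (U \<inter> V)"
proof -
  obtain P1 N1 where 1: "finite P1" "finite N1" "P1 \<subseteq> A" "N1 \<subseteq> A" "P1 \<subseteq> x" "N1 \<inter> x = {}"
    "basic A P1 N1 \<subseteq> U" using assms(1) unfolding nb_def by blast
  obtain P2 N2 where 2: "finite P2" "finite N2" "P2 \<subseteq> A" "N2 \<subseteq> A" "P2 \<subseteq> x" "N2 \<inter> x = {}"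
    "basic A P2 N2 \<subseteq> V" using assms(2) unfolding nb_def by blast
  have s1: "basic A (P1 \<union> P2) (N1 \<union> N2) \<subseteq> basic A P1 N1"
    unfolding basic_def by auto
  have s2: "basic A (P1 \<union> P2) (N1 \<union> N2) \<subseteq> basic A P2 N2"
    unfolding basic_def by auto
  have s: "basic A (P1 \<union> P2) (N1 \<union> N2) \<subseteq> U \<inter> V"
    using s1 s2 1(7) 2(7) by (simp only: Int_greatest subset_trans)
  show ?thesis
  proof (rule nb_intro[OF _ _ _ _ _ _ s])
    show "finite (P1 \<union> P2)" using 1(1) 2(1) by simp
    show "finite (N1 \<union> N2)" using 1(2) 2(2) by simp
    show "P1 \<union> P2 \<subseteq> A" using 1(3) 2(3) by simp
    show "N1 \<union> N2 \<subseteq> A" using 1(4) 2(4) by simp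
    show "P1 \<union> P2 \<subseteq> x" using 1(5) 2(5) by simp
    show "(N1 \<union> N2) \<inter> x = {}" using 1(6) 2(6) by (simp add: Int_Un_distrib2)
  qed
qed

lemma gen_nbhd:
  assumes "generate_topology_on
     (insert (Pow A) ((\<lambda>a. {x. x \<subseteq> A \<and> a \<in> x}) ` A \<union> (\<lambda>a. {x. x \<subseteq> A \<and> a \<notin> x}) ` A)) U"
  shows "\<forall>x\<in>U. nb A x U"
  using assms
proof (induction rule: generate_topology_on.induct)
  case Empty
  then show ?case by simp
next
  case (Int a b)
  show ?case
  proof
    fix x assume x: "x \<in> a \<inter> b"
    then have xa: "x \<in> a" and xb: "x \<in> b" by simp_all
    have "nb A x a" using Int.IH(1) xa by (rule bspec)
    moreover have "nb A x b" using Int.IH(2) xb by (rule bspec)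
    ultimately show "nb A x (a \<inter> b)" by (rule nb_int)
  qed
next
  case (UN K)
  show ?case
  proof
    fix x assume "x \<in> \<Union>K"
    then obtain k where k: "k \<in> K" "x \<in> k" by (rule UnionE)
    have "nb A x k" using UN.IH[OF k(1)] k(2) by (rule bspec)
    moreover have "k \<subseteq> \<Union>K" using k(1) by (rule Union_upper)
    ultimately show "nb A x (\<Union>K)" by (rule nb_mono)
  qed
next
  case (Basis s)
  show ?case
  proof
    fix x assume x: "x \<in> s"
    have "s = Pow A \<or> (\<exists>a\<in>A. s = {x. x \<subseteq> A \<and> a \<in> x}) \<or> (\<exists>a\<in>A. s = {x. x \<subseteq> A \<and> a \<notin> x})"
      using Basis by (simp only: insert_iff Un_iff image_iff)
    then show "nb A x s"
    proof (elim disjE bexE)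
      assume s: "s = Pow A"
      have "basic A {} {} \<subseteq> s" unfolding s basic_def by blast
      moreover have "x \<subseteq> A" using x s by simp
      ultimately show ?thesis by (intro nb_intro) simp_all
    next
      fix a assume a: "a \<in> A" and s: "s = {x. x \<subseteq> A \<and> a \<in> x}"
      have "basic A {a} {} \<subseteq> s" unfolding s basic_def by blast
      moreover have "a \<in> x" using x s by simp
      ultimately show ?thesis using a by (intro nb_intro) simp_all
    next
      fix a assume a: "a \<in> A" and s: "s = {x. x \<subseteq> A \<and> a \<notin> x}"
      have "basic A {} {a} \<subseteq> s" unfolding s basic_def by blast
      moreover have "a \<notin> x" using x s by simp
      ultimately show ?thesis using a by (intro nb_intro) simp_all
    qed
  qed
qed

lemma basic_open:
  assumes "finite P" "finite N" "P \<subseteq> A" "N \<subseteq> A"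
  shows "openin (nat_top A) (basic A P N)"
proof -
  let ?F = "insert (Pow A) ((\<lambda>a. {x. x \<subseteq> A \<and> a \<in> x}) ` P \<union> (\<lambda>a. {x. x \<subseteq> A \<and> a \<notin> x}) ` N)"
  have "basic A P N = \<Inter> ?F" by (auto simp: basic_def)
  moreover have "openin (nat_top A) (\<Inter> ?F)"
    apply (rule openin_Inter)
    using assms by (auto simp: nat_top_def intro!: topology_generated_by_Basis)
  ultimately show ?thesis by simp
qed

lemma top_nat: "topspace (nat_top A) = Pow A"
  by (auto simp: nat_top_def)

theorem lemma5p1:
  fixes A :: "'a::order set" and x :: "'a set"
  assumes "x \<in> up_sets A"
  shows "x \<notin> (nat_top A) closure_of (up_sets A - {x}) \<longleftrightarrow>
         ((\<exists>F. finite F \<and> F \<subseteq> A \<and> x = \<Union> (principal_up A ` F)) \<and>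
          (\<exists>G. finite G \<and> G \<subseteq> A \<and> x = A \<inter> \<Inter> ((\<lambda>a. A - principal_down A a) ` G)))"
proof
  assume "x \<notin> (nat_top A) closure_of (up_sets A - {x})"
  moreover have xA: "x \<subseteq> A" using assms by (simp add: up_sets_def)
  ultimately obtain T where T: "x \<in> T" "openin (nat_top A) T" "\<forall>y\<in>up_sets A - {x}. y \<notin> T"
    by (auto simp: closure_of_def top_nat)
  then obtain P N where PN: "finite P" "finite N" "P \<subseteq> A" "N \<subseteq> A" "P \<subseteq> x" "N \<inter> x = {}"
           "basic A P N \<subseteq> T"
    using gen_nbhd[of A T] unfolding nb_def by (auto simp: nat_top_def openin_topology_generated_by_iff)
  have key: "\<And>y. y \<in> up_sets A \<Longrightarrow> P \<subseteq> y \<Longrightarrow> N \<inter> y = {} \<Longrightarrow> y = x"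
  proof -
    fix y assume y: "y \<in> up_sets A" "P \<subseteq> y" "N \<inter> y = {}"
    then have "y \<subseteq> A" by (simp add: up_sets_def)
    with y have "y \<in> basic A P N" by (simp add: basic_def)
    with PN(7) have "y \<in> T" by blast
    with T(3) y(1) show "y = x" by blast
  qed
  have up: "\<And>a b. a \<in> x \<Longrightarrow> b \<in> A \<Longrightarrow> a \<le> b \<Longrightarrow> b \<in> x"
    using assms by (auto simp: up_sets_def)
  have 1: "x = \<Union> (principal_up A ` P)"
  proof (rule key[symmetric])
    show "\<Union> (principal_up A ` P) \<in> up_sets A"
      unfolding up_sets_def
    proof (intro CollectI conjI ballI impI)
      show "\<Union> (principal_up A ` P) \<subseteq> A" by (auto simp: principal_up_def)
      fix a b assume a: "a \<in> \<Union> (principal_up A ` P)" and b: "b \<in> A" and ab: "a \<le> b"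
      from a obtain p where p: "p \<in> P" "p \<le> a" by (auto simp: principal_up_def)
      from p(2) ab have "p \<le> b" by (rule order_trans)
      with p(1) b show "b \<in> \<Union> (principal_up A ` P)" by (auto simp: principal_up_def)
    qed
    show "P \<subseteq> \<Union> (principal_up A ` P)" using PN(3) by (auto simp: principal_up_def)
    have "\<Union> (principal_up A ` P) \<subseteq> x" using PN(5) up by (auto simp: principal_up_def)
    then show "N \<inter> \<Union> (principal_up A ` P) = {}" using PN(6) by blast
  qed
  have 2: "x = A \<inter> \<Inter> ((\<lambda>a. A - principal_down A a) ` N)"
  proof (rule key[symmetric])
    show "A \<inter> \<Inter> ((\<lambda>a. A - principal_down A a) ` N) \<in> up_sets A"
      unfolding up_sets_def
    proof (intro CollectI conjI ballI impI)
      show "A \<inter> \<Inter> ((\<lambda>a. A - principal_down A a) ` N) \<subseteq> A" by blast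
      fix a b assume a: "a \<in> A \<inter> \<Inter> ((\<lambda>a. A - principal_down A a) ` N)"
        and b: "b \<in> A" and ab: "a \<le> b"
      have "\<not> b \<le> n" if n: "n \<in> N" for n
      proof
        assume "b \<le> n"
        with ab have "a \<le> n" by (rule order_trans)
        moreover from a n have "a \<in> A - principal_down A n" by blast
        ultimately show False by (simp add: principal_down_def)
      qed
      with b show "b \<in> A \<inter> \<Inter> ((\<lambda>a. A - principal_down A a) ` N)"
        by (auto simp: principal_down_def)
    qed
    have "x \<subseteq> A \<inter> \<Inter> ((\<lambda>a. A - principal_down A a) ` N)"
    proof
      fix b assume b: "b \<in> x"
      have bA: "b \<in> A" using xA b by blast
      have "\<not> b \<le> n" if n: "n \<in> N" for n
      proof
        assume "b \<le> n"
        then have "n \<in> x" using up[OF b] PN(4) n by blast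
        then show False using n PN(6) by blast
      qed
      then show "b \<in> A \<inter> \<Inter> ((\<lambda>a. A - principal_down A a) ` N)"
        using bA by (auto simp: principal_down_def)
    qed
    then show "P \<subseteq> A \<inter> \<Inter> ((\<lambda>a. A - principal_down A a) ` N)" using PN(5) by blast
    show "N \<inter> (A \<inter> \<Inter> ((\<lambda>a. A - principal_down A a) ` N)) = {}"
      by (auto simp: principal_down_def)
  qed
  show "(\<exists>F. finite F \<and> F \<subseteq> A \<and> x = \<Union> (principal_up A ` F)) \<and>
          (\<exists>G. finite G \<and> G \<subseteq> A \<and> x = A \<inter> \<Inter> ((\<lambda>a. A - principal_down A a) ` G))"
  proof (rule conjI)
    show "\<exists>F. finite F \<and> F \<subseteq> A \<and> x = \<Union> (principal_up A ` F)"
      using 1 PN(1,3) by (intro exI[of _ P]) simp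
    show "\<exists>G. finite G \<and> G \<subseteq> A \<and> x = A \<inter> \<Inter> ((\<lambda>a. A - principal_down A a) ` G)"
      using 2 PN(2,4) by (intro exI[of _ N]) simp
  qed
next
  assume H: "(\<exists>F. finite F \<and> F \<subseteq> A \<and> x = \<Union> (principal_up A ` F)) \<and>
          (\<exists>G. finite G \<and> G \<subseteq> A \<and> x = A \<inter> \<Inter> ((\<lambda>a. A - principal_down A a) ` G))"
  from conjunct1[OF H] obtain F where F0: "finite F \<and> F \<subseteq> A \<and> x = \<Union> (principal_up A ` F)" ..
  from conjunct2[OF H] obtain G where G0: "finite G \<and> G \<subseteq> A \<and> x = A \<inter> \<Inter> ((\<lambda>a. A - principal_down A a) ` G)" ..
  have F: "finite F" "F \<subseteq> A" "x = \<Union> (principal_up A ` F)"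
    using F0 by (simp_all only:)
  have G: "finite G" "G \<subseteq> A" "x = A \<inter> \<Inter> ((\<lambda>a. A - principal_down A a) ` G)"
    using G0 by (simp_all only:)
  have Fx: "F \<subseteq> x" using F by (auto simp: principal_up_def)
  have Gx: "G \<inter> x = {}" using G by (auto simp: principal_down_def)
  have "\<forall>y\<in>up_sets A - {x}. y \<notin> basic A F G"
  proof (intro ballI notI)
    fix y assume y0: "y \<in> up_sets A - {x}" and yb: "y \<in> basic A F G"
    have y: "y \<in> up_sets A" using y0 by blast
    have "x \<subseteq> y"
    proof
      fix b assume b: "b \<in> x"
      then obtain f where f: "f \<in> F" "b \<in> A" "f \<le> b" using F(3) by (auto simp: principal_up_def)
      have "f \<in> y" using f(1) yb by (simp add: basic_def subset_iff)
      then show "b \<in> y" using y f by (simp add: up_sets_def)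
    qed
    moreover have "y \<subseteq> x"
    proof
      fix b assume b: "b \<in> y"
      have "b \<in> A" using y b by (auto simp: up_sets_def)
      moreover have "\<forall>g\<in>G. \<not> b \<le> g"
      proof (intro ballI notI)
        fix g assume g: "g \<in> G" "b \<le> g"
        have up: "\<forall>a\<in>y. \<forall>c\<in>A. a \<le> c \<longrightarrow> c \<in> y" using y by (simp add: up_sets_def)
        have "g \<in> A" using g G(2) by blast
        with up b g have "g \<in> y" by blast
        moreover have "G \<inter> y = {}" using yb by (simp add: basic_def)
        ultimately show False using g by blast
      qed
      ultimately show "b \<in> x" using G(3) by (auto simp: principal_down_def)
    qed
    ultimately show False using y0 by blast
  qed
  moreover have "x \<in> basic A F G" using Fx Gx G by (auto simp: basic_def)
  ultimately show "x \<notin> (nat_top A) closure_of (up_sets A - {x})"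
    using basic_open[OF F(1) G(1) F(2) G(2)] unfolding closure_of_def by blast
qed

end
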